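(* Let $X$ be a distance-regular graph of diameter $d\geq 2$ on $n$ vertices with degree $k$, $\lambda=a_1$, $\mu=c_2$, and put $r=(n-1)/k$. Then $$\min(\lambda,\mu)<k\left(1+\min\left(\frac{r-1}{d-1},\left(\frac{r}{d}\right)^{\frac{1}{d-1}}\right)\right)^{-1}\quad\text{and}\quad \mu<k\max\left(\frac{d-1}{r-1},\left(\frac{d}{r}\right)^{\frac{1}{d-1}}\right).$$
   Context: A connected graph $X$ of diameter $d$ is distance-regular if there are integers $a_i,b_i,c_i$ ($0\le i\le d$) such that for all vertices $v,w$ with $\mathrm{dist}(v,w)=i$, $w$ has exactly $c_i$ neighbours at distance $i-1$, $a_i$ at distance $i$, $b_i$ at distance $i+1$ from $v$; $X$ is $k$-regular with $k=b_0$; $\lambda=a_1$, $\mu=c_2$. *)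

theory Defs
  imports Complex_Main
begin

definition adj_rel :: "'a set \<Rightarrow> ('a \<Rightarrow> 'a \<Rightarrow> bool) \<Rightarrow> ('a \<times> 'a) set" where
  "adj_rel V E = {(x, y). x \<in> V \<and> y \<in> V \<and> E x y}"

definition gdist :: "'a set \<Rightarrow> ('a \<Rightarrow> 'a \<Rightarrow> bool) \<Rightarrow> 'a \<Rightarrow> 'a \<Rightarrow> nat" where
  "gdist V E v w = (LEAST m. (v, w) \<in> (adj_rel V E) ^^ m)"

definition simple_graph :: "'a set \<Rightarrow> ('a \<Rightarrow> 'a \<Rightarrow> bool) \<Rightarrow> bool" where
  "simple_graph V E \<longleftrightarrow> finite V \<and> V \<noteq> {} \<and>
     (\<forall>x\<in>V. \<forall>y\<in>V. E x y \<longleftrightarrow> E y x) \<and> (\<forall>x\<in>V. \<not> E x x)"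

definition connected_graph :: "'a set \<Rightarrow> ('a \<Rightarrow> 'a \<Rightarrow> bool) \<Rightarrow> bool" where
  "connected_graph V E \<longleftrightarrow> (\<forall>v\<in>V. \<forall>w\<in>V. \<exists>m. (v, w) \<in> (adj_rel V E) ^^ m)"

definition diameter :: "'a set \<Rightarrow> ('a \<Rightarrow> 'a \<Rightarrow> bool) \<Rightarrow> nat" where
  "diameter V E = Max {gdist V E v w | v w. v \<in> V \<and> w \<in> V}"

definition distance_regular ::
  "'a set \<Rightarrow> ('a \<Rightarrow> 'a \<Rightarrow> bool) \<Rightarrow> (nat \<Rightarrow> nat) \<Rightarrow> (nat \<Rightarrow> nat) \<Rightarrow> (nat \<Rightarrow> nat) \<Rightarrow> bool" where
  "distance_regular V E a b c \<longleftrightarrow> simple_graph V E \<and> connected_graph V E \<and>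
     (\<forall>v\<in>V. \<forall>w\<in>V.
        card {u \<in> V. E w u \<and> gdist V E v u + 1 = gdist V E v w} = c (gdist V E v w) \<and>
        card {u \<in> V. E w u \<and> gdist V E v u = gdist V E v w} = a (gdist V E v w) \<and>
        card {u \<in> V. E w u \<and> gdist V E v u = gdist V E v w + 1} = b (gdist V E v w))"

end

theory Submission
  imports Defs
begin


lemma relpow_in_V: "(v,x) \<in> adj_rel V E ^^ m \<Longrightarrow> v \<in> V \<Longrightarrow> x \<in> V"
proof (induction m arbitrary: x)
  case 0 then show ?case by simp
next
  case (Suc m)
  then obtain y where "(y,x) \<in> adj_rel V E" by (meson relpow_Suc_E)
  then show ?case by (simp add: adj_rel_def)
qed

lemma relpow_sym:
  assumes "\<forall>x\<in>V. \<forall>y\<in>V. E x y \<longleftrightarrow> E y x"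
  shows "(v,w) \<in> adj_rel V E ^^ m \<Longrightarrow> (w,v) \<in> adj_rel V E ^^ m"
proof (induction m arbitrary: w)
  case 0 then show ?case by simp
next
  case (Suc m)
  then obtain y where y: "(v,y) \<in> adj_rel V E ^^ m" "(y,w) \<in> adj_rel V E" by (meson relpow_Suc_E)
  have "(w,y) \<in> adj_rel V E" using y(2) assms by (auto simp: adj_rel_def)
  moreover have "(y,v) \<in> adj_rel V E ^^ m" using Suc.IH y(1) by blast
  ultimately show ?case by (rule relpow_Suc_I2)
qed

lemma gdist_le: "(v,w) \<in> adj_rel V E ^^ m \<Longrightarrow> gdist V E v w \<le> m"
  unfolding gdist_def by (rule Least_le)

lemma gdist_path: "connected_graph V E \<Longrightarrow> v \<in> V \<Longrightarrow> w \<in> V \<Longrightarrow>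
   (v,w) \<in> adj_rel V E ^^ (gdist V E v w)"
  unfolding gdist_def connected_graph_def by (meson LeastI_ex)

lemma gdist_tri:
  assumes "connected_graph V E" "x \<in> V" "y \<in> V" "z \<in> V"
  shows "gdist V E x z \<le> gdist V E x y + gdist V E y z"
proof -
  have "(x,z) \<in> adj_rel V E ^^ (gdist V E x y + gdist V E y z)"
    unfolding relpow_add by (rule relcompI; rule gdist_path) (use assms in auto)
  then show ?thesis by (rule gdist_le)
qed

lemma gdist_sym:
  assumes "simple_graph V E" "connected_graph V E" "v \<in> V" "w \<in> V"
  shows "gdist V E v w = gdist V E w v"
proof -
  have s: "\<forall>x\<in>V. \<forall>y\<in>V. E x y \<longleftrightarrow> E y x" using assms(1) by (simp add: simple_graph_def)
  have "gdist V E v w \<le> gdist V E w v"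
    by (rule gdist_le, rule relpow_sym[OF s], rule gdist_path) (use assms in auto)
  moreover have "gdist V E w v \<le> gdist V E v w"
    by (rule gdist_le, rule relpow_sym[OF s], rule gdist_path) (use assms in auto)
  ultimately show ?thesis by simp
qed

lemma gdist_self: "gdist V E v v = 0"
  using gdist_le[where m=0 and v=v and w=v and V=V and E=E] by simp

lemma gdist_zero: "connected_graph V E \<Longrightarrow> v \<in> V \<Longrightarrow> w \<in> V \<Longrightarrow> gdist V E v w = 0 \<Longrightarrow> v = w"
  using gdist_path[of V E v w] by simp

lemma gdist_one: "connected_graph V E \<Longrightarrow> v \<in> V \<Longrightarrow> w \<in> V \<Longrightarrow> gdist V E v w = 1 \<Longrightarrow> E v w"
  using gdist_path[of V E v w] by (simp add: adj_rel_def)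

lemma gdist_adj:
  assumes "simple_graph V E" "connected_graph V E" "v \<in> V" "w \<in> V" "E v w"
  shows "gdist V E v w = 1"
proof -
  have "(v,w) \<in> adj_rel V E" using assms(3,4,5) unfolding adj_rel_def by simp
  then have "(v,w) \<in> adj_rel V E ^^ 1" by simp
  then have "gdist V E v w \<le> 1" by (rule gdist_le)
  moreover have "\<not> E v v" using assms(1,3) unfolding simple_graph_def by blast
  then have "v \<noteq> w" using assms(5) by metis
  then have "gdist V E v w \<noteq> 0" using gdist_zero[OF assms(2,3,4)] by blast
  ultimately show ?thesis by simp
qed

lemma gdist_split:
  assumes "connected_graph V E" "v \<in> V" "w \<in> V" "gdist V E v w = j" "m \<le> j"
  shows "\<exists>x\<in>V. gdist V E v x = m \<and> gdist V E x w = j - m"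
proof -
  have "(v,w) \<in> adj_rel V E ^^ (m + (j - m))" using gdist_path[OF assms(1-3)] assms(4,5) by simp
  then obtain x where x: "(v,x) \<in> adj_rel V E ^^ m" "(x,w) \<in> adj_rel V E ^^ (j - m)"
    unfolding relpow_add by (rule relcompEpair)
  have xV: "x \<in> V" by (rule relpow_in_V[OF x(1) assms(2)])
  have 1: "gdist V E v x \<le> m" "gdist V E x w \<le> j - m" using gdist_le[OF x(1)] gdist_le[OF x(2)] by auto
  have "j \<le> gdist V E v x + gdist V E x w" using gdist_tri[OF assms(1,2) xV assms(3)] assms(4) by simp
  then have "gdist V E v x = m" "gdist V E x w = j - m" using 1 assms(5) by linarith+
  then show ?thesis using xV by blast
qed


context
  fixes V :: "'a set" and E a b c
  assumes drg: "distance_regular V E a b c"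
begin

lemma sg: "simple_graph V E"
  using drg unfolding distance_regular_def by (elim conjE)
lemma cg: "connected_graph V E"
  using drg unfolding distance_regular_def by (elim conjE)
lemma fin: "finite V"
  using sg unfolding simple_graph_def by (elim conjE)

lemma symE: "v \<in> V \<Longrightarrow> w \<in> V \<Longrightarrow> E v w \<longleftrightarrow> E w v"
  using sg unfolding simple_graph_def by (elim conjE) (meson bspec)

lemma drg_all: "\<forall>v\<in>V. \<forall>w\<in>V.
        card {u \<in> V. E w u \<and> gdist V E v u + 1 = gdist V E v w} = c (gdist V E v w) \<and>
        card {u \<in> V. E w u \<and> gdist V E v u = gdist V E v w} = a (gdist V E v w) \<and>
        card {u \<in> V. E w u \<and> gdist V E v u = gdist V E v w + 1} = b (gdist V E v w)"
  using drg unfolding distance_regular_def by (elim conjE)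

lemma cset: "v \<in> V \<Longrightarrow> w \<in> V \<Longrightarrow>
   card {u \<in> V. E w u \<and> gdist V E v u + 1 = gdist V E v w} = c (gdist V E v w)"
  using drg_all by (meson bspec)
lemma aset: "v \<in> V \<Longrightarrow> w \<in> V \<Longrightarrow>
   card {u \<in> V. E w u \<and> gdist V E v u = gdist V E v w} = a (gdist V E v w)"
  using drg_all by (meson bspec)
lemma bset: "v \<in> V \<Longrightarrow> w \<in> V \<Longrightarrow>
   card {u \<in> V. E w u \<and> gdist V E v u = gdist V E v w + 1} = b (gdist V E v w)"
  using drg_all by (meson bspec)

lemma card_nbr: assumes "w \<in> V" shows "card {u \<in> V. E w u} = b 0"
proof -
  have "{u \<in> V. E w u} = {u \<in> V. E w u \<and> gdist V E w u = gdist V E w w + 1}"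
    using gdist_adj[OF sg cg assms] by (auto simp: gdist_self)
  then show ?thesis using bset[OF assms assms] by (simp add: gdist_self)
qed

lemma dist_set_finite: "finite {gdist V E v w | v w. v \<in> V \<and> w \<in> V}"
proof -
  have "{gdist V E v w | v w. v \<in> V \<and> w \<in> V} = (\<lambda>(v,w). gdist V E v w) ` (V \<times> V)" by auto
  then show ?thesis using fin by simp
qed

lemma dist_le_diam: "v \<in> V \<Longrightarrow> w \<in> V \<Longrightarrow> gdist V E v w \<le> diameter V E"
  unfolding diameter_def by (rule Max_ge[OF dist_set_finite]) auto

lemma exists_dist: assumes "j \<le> diameter V E" shows "\<exists>v\<in>V. \<exists>w\<in>V. gdist V E v w = j"
proof -
  have ne: "V \<noteq> {}" using sg by (simp add: simple_graph_def)
  have "diameter V E \<in> {gdist V E v w | v w. v \<in> V \<and> w \<in> V}"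
    unfolding diameter_def by (rule Max_in[OF dist_set_finite]) (use ne in auto)
  then obtain v w where vw: "v \<in> V" "w \<in> V" "gdist V E v w = diameter V E" by auto
  then obtain x where "x \<in> V" "gdist V E v x = j"
    using gdist_split[OF cg vw(1,2) vw(3) assms] by auto
  then show ?thesis using vw by blast
qed

lemma c_mono: assumes "v \<in> V" "w \<in> V" "gdist V E v w = j" "2 \<le> j" shows "c 2 \<le> c j"
proof -
  obtain x where x: "x \<in> V" "gdist V E v x = j - 2" "gdist V E x w = 2"
    using gdist_split[OF cg assms(1,2,3), of "j-2"] assms(4) by auto
  have "{u \<in> V. E w u \<and> gdist V E x u + 1 = gdist V E x w} \<subseteq>
        {u \<in> V. E w u \<and> gdist V E v u + 1 = gdist V E v w}"
  proof safe
    fix u assume u: "u \<in> V" "E w u" "gdist V E x u + 1 = gdist V E x w"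
    have "gdist V E v u \<le> gdist V E v x + gdist V E x u" using gdist_tri[OF cg assms(1) x(1) u(1)] .
    moreover have "gdist V E v w \<le> gdist V E v u + gdist V E u w" using gdist_tri[OF cg assms(1) u(1) assms(2)] .
    moreover have "gdist V E u w = 1"
      using gdist_adj[OF sg cg u(1) assms(2)] symE[OF u(1) assms(2)] u(2) by simp
    ultimately show "gdist V E v u + 1 = gdist V E v w" using x u(3) assms by simp
  qed
  then have "card {u \<in> V. E w u \<and> gdist V E x u + 1 = gdist V E x w} \<le>
        card {u \<in> V. E w u \<and> gdist V E v u + 1 = gdist V E v w}"
    by (rule card_mono[rotated]) (use fin in simp)
  then show ?thesis using cset[OF x(1) assms(2)] cset[OF assms(1,2)] x(3) assms(3) by simp
qed

lemma b_mono: assumes "v \<in> V" "w \<in> V" "gdist V E v w = j" "1 \<le> j" shows "b j \<le> b 1"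
proof -
  obtain x where x: "x \<in> V" "gdist V E v x = j - 1" "gdist V E x w = 1"
    using gdist_split[OF cg assms(1,2,3), of "j-1"] assms(4) by auto
  have "{u \<in> V. E w u \<and> gdist V E v u = gdist V E v w + 1} \<subseteq>
        {u \<in> V. E w u \<and> gdist V E x u = gdist V E x w + 1}"
  proof safe
    fix u assume u: "u \<in> V" "E w u" "gdist V E v u = gdist V E v w + 1"
    have "gdist V E v u \<le> gdist V E v x + gdist V E x u" using gdist_tri[OF cg assms(1) x(1) u(1)] .
    moreover have "gdist V E x u \<le> gdist V E x w + gdist V E w u" using gdist_tri[OF cg x(1) assms(2) u(1)] .
    moreover have "gdist V E w u = 1"
      using gdist_adj[OF sg cg assms(2) u(1)] u(2) by simp
    ultimately show "gdist V E x u = gdist V E x w + 1" using x u(3) assms by simp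
  qed
  then have "card {u \<in> V. E w u \<and> gdist V E v u = gdist V E v w + 1} \<le>
        card {u \<in> V. E w u \<and> gdist V E x u = gdist V E x w + 1}"
    by (rule card_mono[rotated]) (use fin in simp)
  then show ?thesis using bset[OF x(1) assms(2)] bset[OF assms(1,2)] x(3) assms(3) by simp
qed


lemma dist2: assumes "2 \<le> diameter V E"
  obtains v w x where "v \<in> V" "w \<in> V" "x \<in> V" "gdist V E v w = 2" "gdist V E v x = 1" "gdist V E x w = 1"
proof -
  obtain v w where vw: "v \<in> V" "w \<in> V" "gdist V E v w = 2" using exists_dist[OF assms] by auto
  obtain x where "x \<in> V" "gdist V E v x = 1" "gdist V E x w = 1"
    using gdist_split[OF cg vw(1,2,3), of 1] by auto
  then show ?thesis using that vw by blast
qed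

lemma c2_facts: assumes "2 \<le> diameter V E" shows "1 \<le> c 2" "c 2 \<le> b 0"
proof -
  obtain v w x where h: "v \<in> V" "w \<in> V" "x \<in> V" "gdist V E v w = 2" "gdist V E v x = 1" "gdist V E x w = 1"
    using dist2[OF assms] by blast
  let ?C = "{u \<in> V. E w u \<and> gdist V E v u + 1 = gdist V E v w}"
  have ex: "E w x" using gdist_one[OF cg h(3,2) h(6)] symE[OF h(3,2)] by simp
  have "x \<in> ?C" using h ex by simp
  then have "card ?C \<ge> 1" using fin by (metis (no_types, lifting) One_nat_def Suc_leI card_gt_0_iff empty_iff finite_subset mem_Collect_eq subsetI)
  then show "1 \<le> c 2" using cset[OF h(1,2)] h(4) by simp
  have "card ?C \<le> card {u \<in> V. E w u}" by (rule card_mono) (use fin in auto)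
  then show "c 2 \<le> b 0" using cset[OF h(1,2)] h(4) card_nbr[OF h(2)] by simp
qed

lemma b1a1: assumes "2 \<le> diameter V E" shows "b 1 + a 1 + 1 \<le> b 0"
proof -
  obtain v w x where h: "v \<in> V" "w \<in> V" "x \<in> V" "gdist V E v w = 2" "gdist V E v x = 1" "gdist V E x w = 1"
    using dist2[OF assms] by blast
  let ?A = "{u \<in> V. E x u \<and> gdist V E v u = gdist V E v x}"
  let ?B = "{u \<in> V. E x u \<and> gdist V E v u = gdist V E v x + 1}"
  have ex: "E x v" using gdist_one[OF cg h(1,3) h(5)] symE[OF h(1,3)] by simp
  have sub: "?A \<union> ?B \<union> {v} \<subseteq> {u \<in> V. E x u}" using ex h by auto
  have "card (?A \<union> ?B \<union> {v}) = card ?A + card ?B + 1"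
  proof -
    have f: "finite ?A" "finite ?B" using fin by auto
    have "card (?A \<union> ?B) = card ?A + card ?B" by (rule card_Un_disjoint) (use f in auto)
    moreover have "v \<notin> ?A \<union> ?B" using h by (auto simp: gdist_self)
    ultimately show ?thesis using f by simp
  qed
  moreover have "card (?A \<union> ?B \<union> {v}) \<le> card {u \<in> V. E x u}" by (rule card_mono[OF _ sub]) (use fin in simp)
  ultimately show ?thesis using aset[OF h(1,3)] bset[OF h(1,3)] card_nbr[OF h(3)] h(5) by simp
qed

lemma nV: assumes "2 \<le> diameter V E" shows "b 0 + 2 \<le> card V"
proof -
  obtain v w x where h: "v \<in> V" "w \<in> V" "x \<in> V" "gdist V E v w = 2" "gdist V E v x = 1" "gdist V E x w = 1"
    using dist2[OF assms] by blast
  have sub: "{u \<in> V. E v u} \<union> {v} \<union> {w} \<subseteq> V" using h by auto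
  have vn: "v \<notin> {u \<in> V. E v u}" using sg by (auto simp: simple_graph_def)
  have wn: "w \<notin> {u \<in> V. E v u} \<union> {v}" using h gdist_adj[OF sg cg h(1)] by (auto simp: gdist_self)
  have "card ({u \<in> V. E v u} \<union> {v} \<union> {w}) = b 0 + 2"
    using card_nbr[OF h(1)] vn wn fin by simp
  then show ?thesis using card_mono[OF fin sub] by simp
qed

lemma S0: "v \<in> V \<Longrightarrow> {u \<in> V. gdist V E v u = 0} = {v}"
  using gdist_zero[OF cg] by (auto simp: gdist_self)

lemma S1: "v \<in> V \<Longrightarrow> card {u \<in> V. gdist V E v u = 1} = b 0"
proof -
  assume v: "v \<in> V"
  have "{u \<in> V. gdist V E v u = 1} = {u \<in> V. E v u}"
    using gdist_adj[OF sg cg v] gdist_one[OF cg v] by auto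
  then show ?thesis using card_nbr[OF v] by simp
qed

lemma double_count: assumes v: "v \<in> V"
  shows "card {u \<in> V. gdist V E v u = Suc i} * c (Suc i) = card {u \<in> V. gdist V E v u = i} * b i"
proof -
  let ?S = "\<lambda>i. {u \<in> V. gdist V E v u = i}"
  let ?f = "\<lambda>x y. if E x y then 1 else (0::nat)"
  have fS: "\<And>i. finite (?S i)" using fin by auto
  have L: "\<forall>y\<in>?S (Suc i). card {x \<in> ?S i. E x y} = c (Suc i)"
  proof
    fix y assume y: "y \<in> ?S (Suc i)"
    have "{x \<in> ?S i. E x y} = {u \<in> V. E y u \<and> gdist V E v u + 1 = gdist V E v y}"
      using y symE by auto
    then show "card {x \<in> ?S i. E x y} = c (Suc i)" using cset[OF v, of y] y by simp
  qed
  have R: "\<forall>x\<in>?S i. card {y \<in> ?S (Suc i). E x y} = b i"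
  proof
    fix x assume x: "x \<in> ?S i"
    have "{y \<in> ?S (Suc i). E x y} = {u \<in> V. E x u \<and> gdist V E v u = gdist V E v x + 1}"
      using x by auto
    then show "card {y \<in> ?S (Suc i). E x y} = b i" using bset[OF v, of x] x by simp
  qed
  have cs: "\<And>A P. finite A \<Longrightarrow> card {x \<in> A. P x} = (\<Sum>x\<in>A. if P x then 1 else (0::nat))"
    by (simp add: sum.If_cases Int_def)
  have "(\<Sum>y\<in>?S (Suc i). card {x \<in> ?S i. E x y}) = (\<Sum>y\<in>?S (Suc i). \<Sum>x\<in>?S i. ?f x y)"
    using cs[OF fS] by simp
  also have "\<dots> = (\<Sum>x\<in>?S i. \<Sum>y\<in>?S (Suc i). ?f x y)" by (rule sum.swap)
  also have "\<dots> = (\<Sum>x\<in>?S i. card {y \<in> ?S (Suc i). E x y})" using cs[OF fS] by simp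
  finally show ?thesis using L R by simp
qed

lemma card_V_sum: "v \<in> V \<Longrightarrow> card V = (\<Sum>i\<le>diameter V E. card {u \<in> V. gdist V E v u = i})"
proof -
  assume v: "v \<in> V"
  have "(\<Sum>i\<le>diameter V E. \<Sum>u\<in>{u \<in> V. gdist V E v u = i}. (1::nat)) = (\<Sum>u\<in>V. 1)"
    by (rule sum.group) (use fin dist_le_diam[OF v] in auto)
  then show ?thesis by simp
qed


lemma step_le: assumes v: "v \<in> V" and "1 \<le> i" and d2: "2 \<le> diameter V E"
  shows "card {u \<in> V. gdist V E v u = Suc i} * c 2 \<le> card {u \<in> V. gdist V E v u = i} * b 1"
proof -
  let ?S = "\<lambda>i. {u \<in> V. gdist V E v u = i}"
  have 1: "card (?S (Suc i)) * c 2 \<le> card (?S (Suc i)) * c (Suc i)"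
  proof (cases "?S (Suc i) = {}")
    case False
    then obtain y where "y \<in> ?S (Suc i)" by blast
    then have "c 2 \<le> c (Suc i)" using c_mono[OF v, of y "Suc i"] assms(2) by simp
    then show ?thesis by simp
  next
    case True
    then show ?thesis by (simp only: card.empty mult_0 le0)
  qed
  have 2: "card (?S i) * b i \<le> card (?S i) * b 1"
  proof (cases "?S i = {}")
    case False
    then obtain y where "y \<in> ?S i" by blast
    then have "b i \<le> b 1" using b_mono[OF v, of y i] assms(2) by simp
    then show ?thesis by simp
  next
    case True
    then show ?thesis by (simp only: card.empty mult_0 le0)
  qed
  have 3: "card (?S (Suc i)) * c (Suc i) = card (?S i) * b i" by (rule double_count[OF v])
  from 1 2 3 show ?thesis by linarith
qed

lemma main_bound: assumes v: "v \<in> V" and d2: "2 \<le> diameter V E"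
  shows "real (card V) - 1 \<le> real (b 0) * (\<Sum>j<diameter V E. (real (b 1) / real (c 2)) ^ j)"
proof -
  let ?s = "\<lambda>i. real (card {u \<in> V. gdist V E v u = i})"
  let ?q = "real (b 1) / real (c 2)"
  have c2: "real (c 2) > 0" using c2_facts(1)[OF d2] by simp
  have bnd: "?s (Suc j) \<le> real (b 0) * ?q ^ j" for j
  proof (induction j)
    case 0 then show ?case using S1[OF v] by simp
  next
    case (Suc j)
    have "?s (Suc (Suc j)) * real (c 2) \<le> ?s (Suc j) * real (b 1)"
      using step_le[OF v _ d2, of "Suc j"] by (simp flip: of_nat_mult)
    then have "?s (Suc (Suc j)) \<le> ?s (Suc j) * ?q" using c2 by (simp add: field_simps)
    also have "\<dots> \<le> real (b 0) * ?q ^ j * ?q" by (rule mult_right_mono[OF Suc.IH]) simp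
    finally show ?case by (simp add: field_simps)
  qed
  obtain D where D: "diameter V E = Suc D" using d2 by (cases "diameter V E") auto
  have "real (card V) = (\<Sum>i\<le>diameter V E. ?s i)" using card_V_sum[OF v] by simp
  also have "\<dots> = 1 + (\<Sum>j<diameter V E. ?s (Suc j))"
    unfolding D sum.atMost_Suc_shift using S0[OF v] by (simp add: lessThan_Suc_atMost)
  finally have "real (card V) - 1 = (\<Sum>j<diameter V E. ?s (Suc j))" by simp
  also have "\<dots> \<le> (\<Sum>j<diameter V E. real (b 0) * ?q ^ j)" by (rule sum_mono) (use bnd in auto)
  finally show ?thesis by (simp add: sum_distrib_left)
qed

end



lemma P_mono: fixes q T :: real assumes "0 \<le> q" "q < T" "2 \<le> D"
  shows "(\<Sum>j<D. q^j) < (\<Sum>j<D. T^j)"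
proof (rule sum_strict_mono_ex1)
  show "\<forall>x\<in>{..<D}. q ^ x \<le> T ^ x" using assms by (auto intro: power_mono)
  show "\<exists>a\<in>{..<D}. q ^ a < T ^ a" using assms by (intro bexI[of _ 1]) auto
qed simp

lemma powr_bound: fixes T x :: real assumes "0 \<le> T" "0 < x" "2 \<le> D" "T \<le> x powr (1 / (real D - 1))"
  shows "T^(D-1) \<le> x"
proof -
  have "T^(D-1) \<le> (x powr (1 / (real D - 1)))^(D-1)" using assms by (intro power_mono) auto
  also have "\<dots> = (x powr (1 / (real D - 1))) powr (real (D-1))"
    by (rule powr_realpow[symmetric]) (use assms in simp)
  also have "\<dots> = x powr ((1 / (real D - 1)) * real (D-1))" by (simp add: powr_powr)
  also have "(1 / (real D - 1)) * real (D-1) = 1" using assms(3) by (simp add: of_nat_diff)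
  finally show ?thesis using assms(2) by simp
qed

lemma L: fixes T r :: real assumes "0 \<le> T" "2 \<le> D" "1 < r" "T \<le> (r - 1) / (real D - 1)"
  "T^(D-1) \<le> r / real D"
  shows "(\<Sum>j<D. T^j) \<le> r"
proof -
  have D1: "real D - 1 > 0" using assms(2) by simp
  have rT: "1 + (real D - 1) * T \<le> r" using assms(4) D1 by (simp add: field_simps)
  obtain D' where D': "D = Suc D'" using assms(2) by (cases D) auto
  have split: "(\<Sum>j<D. T^j) = 1 + (\<Sum>j<D'. T^(Suc j))"
    unfolding D' sum.lessThan_Suc_shift by simp
  show ?thesis
  proof (cases "T \<le> 1")
    case True
    have "(\<Sum>j<D'. T^(Suc j)) \<le> (\<Sum>j<D'. T)"
      by (rule sum_mono) (use True assms(1) in \<open>simp add: mult_left_le power_le_one\<close>)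
    then show ?thesis using split rT D' by simp
  next
    case False
    have "(\<Sum>j<D'. T^(Suc j)) \<le> (\<Sum>j<D'. T^(D-1))"
      by (rule sum_mono) (use False D' in \<open>auto simp del: power_Suc intro!: power_increasing\<close>)
    also have "\<dots> \<le> real D' * (r / real D)" using mult_left_mono[OF assms(5), of "real D'"] by simp
    finally have 1: "(\<Sum>j<D. T^j) \<le> 1 + real D' * (r / real D)" using split by simp
    have "r \<ge> real D" using rT False D1 by (smt (verit) mult_le_cancel_left1)
    then have "1 + real D' * (r / real D) \<le> r" using D' by (simp add: field_simps)
    then show ?thesis using 1 by simp
  qed
qed


lemma final_real:
  fixes k lam mu b1 nV r d :: real and D :: nat
  assumes D2: "2 \<le> D" and k: "k > 0" and mu: "mu > 0" and lam: "lam \<ge> 0" and b1: "b1 \<ge> 0"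
    and b1lam: "b1 + lam + 1 \<le> k" and muk: "mu \<le> k" and nk: "nV - 1 > k"
    and bnd: "nV - 1 \<le> k * (\<Sum>j<D. (b1/mu)^j)"
    and d: "d = real D" and r: "r = (nV - 1) / k"
  shows "min lam mu < k / (1 + min ((r - 1) / (d - 1)) ((r / d) powr (1 / (d - 1))))
       \<and> mu < k * max ((d - 1) / (r - 1)) ((d / r) powr (1 / (d - 1)))"
proof -
  have r1: "r > 1" using nk k r by simp
  have d1: "d - 1 > 0" using D2 d by simp
  have rP: "r \<le> (\<Sum>j<D. (b1/mu)^j)" unfolding r by (subst pos_divide_le_eq[OF k]) (use bnd in \<open>simp add: mult.commute\<close>)
  have q0: "b1 / mu \<ge> 0" using b1 mu by simp
  let ?A = "(r - 1) / (d - 1)" and ?B = "(r / d) powr (1 / (d - 1))"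
  have A0: "?A > 0" using r1 d1 by simp
  have B0: "?B > 0" using r1 d1 by simp
  have key: "\<And>T. 0 \<le> T \<Longrightarrow> b1 / mu < T \<Longrightarrow> T \<le> ?A \<Longrightarrow> T \<le> ?B \<Longrightarrow> False"
  proof -
    fix T assume T: "0 \<le> T" "b1 / mu < T" "T \<le> ?A" "T \<le> ?B"
    have "T^(D-1) \<le> r / real D"
      by (rule powr_bound) (use T r1 D2 d in auto)
    then have "(\<Sum>j<D. T^j) \<le> r" by (intro L) (use T r1 D2 d in auto)
    moreover have "(\<Sum>j<D. (b1/mu)^j) < (\<Sum>j<D. T^j)" by (rule P_mono) (use q0 T D2 in auto)
    ultimately show False using rP by simp
  qed
  have part1: "min lam mu < k / (1 + min ?A ?B)"
  proof -
    define sm where "sm = min ?A ?B"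
    define m where "m = min lam mu"
    have smA: "sm \<le> ?A" and smB: "sm \<le> ?B" unfolding sm_def by auto
    have sm0: "sm > 0" unfolding sm_def using A0 B0 by (simp only: min_less_iff_conj)
    have mle: "m \<le> lam" "m \<le> mu" "m = lam \<or> m = mu" unfolding m_def by auto
    have "m < k / (1 + sm)"
    proof (rule ccontr)
      assume "\<not> ?thesis"
      then have h: "k / (1 + sm) \<le> m" by (simp only: not_less)
      have s0: "1 + sm > 0" using sm0 by linarith
      have "k / (1 + sm) > 0" using k s0 by simp
      then have m0: "m > 0" using h by simp
      define T where "T = k / m - 1"
      have "k \<le> m * (1 + sm)" using h s0 by (simp add: field_simps)
      then have "k / m \<le> 1 + sm" using m0 by (simp add: field_simps)
      then have Ts: "T \<le> sm" unfolding T_def by simp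
      have "m \<le> k" using muk mle by simp
      then have T0: "0 \<le> T" unfolding T_def using m0 by (simp add: field_simps)
      have qT: "b1 / mu < T"
      proof (cases "m = mu")
        case True
        then have "mu \<le> lam" using mle by simp
        then show ?thesis unfolding T_def using True b1lam mu lam by (simp add: field_simps)
      next
        case False
        then have mm: "m = lam" "lam > 0" "lam < mu" using m0 mle by auto
        have "b1 / mu \<le> b1 / lam" using mm b1 by (intro divide_left_mono) auto
        also have "b1 / lam < k / lam - 1" using mm b1lam by (simp add: field_simps)
        finally show ?thesis unfolding T_def using mm by simp
      qed
      show False using key[OF T0 qT] Ts smA smB by simp
    qed
    then show ?thesis unfolding m_def sm_def .
  qed
  have part2: "mu < k * max ((d - 1) / (r - 1)) ((d / r) powr (1 / (d - 1)))"
  proof (rule ccontr)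
    assume "\<not> ?thesis"
    then have hm: "k * max ((d - 1) / (r - 1)) ((d / r) powr (1 / (d - 1))) \<le> mu" by (simp only: not_less)
    have "k * ((d - 1) / (r - 1)) \<le> k * max ((d - 1) / (r - 1)) ((d / r) powr (1 / (d - 1)))"
      using k by (intro mult_left_mono) auto
    then have h1: "k * ((d - 1) / (r - 1)) \<le> mu" using hm by linarith
    have "k * ((d / r) powr (1 / (d - 1))) \<le> k * max ((d - 1) / (r - 1)) ((d / r) powr (1 / (d - 1)))"
      using k by (intro mult_left_mono) auto
    then have h2: "k * ((d / r) powr (1 / (d - 1))) \<le> mu" using hm by linarith
    define T where "T = k / mu"
    have T0: "0 \<le> T" using k mu T_def by simp
    have qT: "b1 / mu < T" unfolding T_def using b1lam lam mu by (simp add: divide_strict_right_mono)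
    have TA: "T \<le> ?A" using h1 r1 d1 mu unfolding T_def by (simp add: field_simps)
    have prod: "(d / r) powr (1 / (d - 1)) * ?B = 1"
      using r1 d1 by (simp add: powr_mult[symmetric])
    have Bp: "(d / r) powr (1 / (d - 1)) > 0" using r1 d1 by simp
    have "T * (d / r) powr (1 / (d - 1)) \<le> 1" using h2 mu unfolding T_def by (simp add: field_simps)
    then have "T * (d / r) powr (1 / (d - 1)) * ?B \<le> ?B" using B0 by (simp add: mult_right_mono)
    then have TB: "T \<le> ?B" using prod by (simp add: mult.assoc)
    show False using key[OF T0 qT TA TB] .
  qed
  show ?thesis using part1 part2 by simp
qed


theorem lemma4p4:
  fixes V :: "'a set" and E :: "'a \<Rightarrow> 'a \<Rightarrow> bool" and a b c :: "nat \<Rightarrow> nat"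
  assumes drg: "distance_regular V E a b c"
    and diam: "diameter V E \<ge> 2"
  defines "d \<equiv> real (diameter V E)"
    and "n \<equiv> real (card V)"
    and "k \<equiv> real (b 0)"
    and "lam \<equiv> real (a 1)"
    and "mu \<equiv> real (c 2)"
    and "r \<equiv> (real (card V) - 1) / real (b 0)"
  shows "min lam mu < k / (1 + min ((r - 1) / (d - 1)) ((r / d) powr (1 / (d - 1))))
       \<and> mu < k * max ((d - 1) / (r - 1)) ((d / r) powr (1 / (d - 1)))"
proof -
  have "V \<noteq> {}" using sg[OF drg] by (simp add: simple_graph_def)
  then obtain v where v: "v \<in> V" by blast
  have c1: "1 \<le> c 2" and c2: "c 2 \<le> b 0" using c2_facts[OF drg diam] by auto
  have ba: "b 1 + a 1 + 1 \<le> b 0" using b1a1[OF drg diam] .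
  have nv: "b 0 + 2 \<le> card V" using nV[OF drg diam] .
  have bnd: "real (card V) - 1 \<le> real (b 0) * (\<Sum>j<diameter V E. (real (b 1) / real (c 2)) ^ j)"
    using main_bound[OF drg v diam] .
  show ?thesis unfolding k_def lam_def mu_def
  proof (rule final_real[OF diam _ _ _ _ _ _ _ bnd d_def[THEN meta_eq_to_obj_eq] r_def[THEN meta_eq_to_obj_eq]])
    show "0 < real (b 0)" using c1 c2 by simp
    show "0 < real (c 2)" using c1 by simp
    show "0 \<le> real (a 1)" by simp
    show "0 \<le> real (b 1)" by simp
    show "real (b 1) + real (a 1) + 1 \<le> real (b 0)" using ba by linarith
    show "real (c 2) \<le> real (b 0)" using c2 by simp
    show "real (b 0) < real (card V) - 1" using nv by linarith
  qed
qed


end
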